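(* A function $f \in L^1(\mathbb{R})$ satisfies $f_{k_0}\in L^\infty(\mathbb{R})$ for some $k_0\in\mathbb{N}$ if and only if its Fourier transform $\widehat f$ belongs to $L^p(\mathbb{R})$ for some $p \in [1,\infty)$.
   Context: For $f\in L^1(\mathbb{R})$, $f_1 := f$ and $f_{k+1} := f_k * f$, i.e. $f_{k+1}(x)=\int_\mathbb{R} f_k(x-y)f(y)\,\mathrm{d}y$. The Fourier transform is $\widehat f(\theta) := \int_\mathbb{R} e^{i\theta x} f(x)\,\mathrm{d}x$. *)

theory Defs
  imports "HOL-Analysis.Analysis"
begin

definition conv :: "(real \<Rightarrow> complex) \<Rightarrow> (real \<Rightarrow> complex) \<Rightarrow> real \<Rightarrow> complex" where
  "conv g h x = (LINT y|lborel. g (x - y) * h y)"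

text \<open>Convolution powers: conv_pow f k is f_k for k \<ge> 1 (f_1 = f, f_(k+1) = f_k * f).
  The value at k = 0 is a dummy (set to f) and never used.\<close>
fun conv_pow :: "(real \<Rightarrow> complex) \<Rightarrow> nat \<Rightarrow> real \<Rightarrow> complex" where
  "conv_pow f 0 = f"
| "conv_pow f (Suc 0) = f"
| "conv_pow f (Suc (Suc k)) = conv (conv_pow f (Suc k)) f"

definition fourier :: "(real \<Rightarrow> complex) \<Rightarrow> real \<Rightarrow> complex" where
  "fourier f \<theta> = (LINT x|lborel. exp (\<i> * complex_of_real (\<theta> * x)) * f x)"

definition in_Linf :: "(real \<Rightarrow> complex) \<Rightarrow> bool" where
  "in_Linf g \<longleftrightarrow> g \<in> borel_measurable lborel \<and> (\<exists>C. AE x in lborel. norm (g x) \<le> C)"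

definition in_Lp :: "real \<Rightarrow> (real \<Rightarrow> complex) \<Rightarrow> bool" where
  "in_Lp p g \<longleftrightarrow> g \<in> borel_measurable lborel \<and> integrable lborel (\<lambda>x. norm (g x) powr p)"

end

theory Submission
  imports Defs "HOL-Probability.Probability"
begin




definition gk :: "real \<Rightarrow> real \<Rightarrow> real" where
  "gk s z = exp (-((z/s)^2)/2) / s"

lemma gauss_ft0: "(LINT x|lborel. std_normal_density x *\<^sub>R exp (\<i> * complex_of_real (t * x))) = complex_of_real (exp (-(t^2)/2))"
proof -
  have "char std_normal_distribution t = complex_of_real (exp (-(t^2)/2))"
    by (simp add: char_std_normal_distribution)
  then show ?thesis unfolding char_def
    by (subst (asm) integral_density) auto
qed

lemma gauss_ft:
  assumes s: "s > 0"
  shows "(LINT \<theta>|lborel. exp (\<i> * complex_of_real (\<theta> * z)) * complex_of_real (std_normal_density (s * \<theta>))) = complex_of_real (gk s z)"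
proof -
  have "(LINT \<theta>|lborel. exp (\<i> * complex_of_real (\<theta> * z)) * complex_of_real (std_normal_density (s * \<theta>)))
     = \<bar>1/s\<bar> *\<^sub>R (LINT x|lborel. exp (\<i> * complex_of_real ((0 + 1/s * x) * z)) * complex_of_real (std_normal_density (s * (0 + 1/s*x))))"
    using s by (intro lborel_integral_real_affine) auto
  also have "\<dots> = (1/s) *\<^sub>R (LINT x|lborel. std_normal_density x *\<^sub>R exp (\<i> * complex_of_real ((z/s) * x)))"
    using s by (intro arg_cong2[where f="(*\<^sub>R)"] Bochner_Integration.integral_cong) (auto simp: scaleR_conv_of_real mult.commute)
  also have "\<dots> = (1/s) *\<^sub>R complex_of_real (exp (-((z/s)^2)/2))"
    by (simp only: gauss_ft0)
  also have "\<dots> = complex_of_real (gk s z)"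
    by (simp add: gk_def scaleR_conv_of_real)
  finally show ?thesis .
qed


lemma gk_pos: "s > 0 \<Longrightarrow> gk s z > 0"
  by (simp add: gk_def)

lemma gk_shift_normal: "s > 0 \<Longrightarrow> gk s (y - x) = sqrt (2*pi) * normal_density x s y"
  by (simp add: gk_def normal_density_def power_divide real_sqrt_mult field_simps)

lemma gk_integrable: "s > 0 \<Longrightarrow> integrable lborel (\<lambda>y. gk s (y - x))"
  by (simp add: gk_shift_normal)

lemma gk_integral: "s > 0 \<Longrightarrow> (LINT y|lborel. gk s (y - x)) = sqrt (2*pi)"
  using integral_normal_density[of s x] by (simp add: gk_shift_normal)

lemma gk_measurable'[measurable]: "gk s \<in> borel_measurable borel"
  unfolding gk_def by measurable

lemma snd_le: "std_normal_density x \<le> 1"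
proof -
  have "exp (- x\<^sup>2 / 2) \<le> 1" by simp
  moreover have "1 \<le> sqrt (2*pi)" using pi_gt3 by simp
  ultimately have "exp (- x\<^sup>2 / 2) \<le> sqrt (2*pi)" by linarith
  then show ?thesis unfolding std_normal_density_def by simp
qed

lemma snd_integrable: "s > 0 \<Longrightarrow> integrable lborel (\<lambda>\<theta>. std_normal_density (s * \<theta>))"
  using lborel_integrable_real_affine[of "std_normal_density" s 0] by simp

lemma prod_bound_integrable:
  fixes F :: "real \<times> real \<Rightarrow> complex"
  assumes F[measurable]: "F \<in> borel_measurable (lborel \<Otimes>\<^sub>M lborel)"
    and a: "integrable lborel a" and b: "integrable lborel b"
    and bnd: "\<And>x y. norm (F (x, y)) \<le> a x * b y"
  shows "integrable (lborel \<Otimes>\<^sub>M lborel) F"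
proof -
  have [measurable]: "a \<in> borel_measurable lborel" "b \<in> borel_measurable lborel"
    using a b by auto
  have G: "integrable (lborel \<Otimes>\<^sub>M lborel) (\<lambda>(x,y). a x * b y)"
  proof (rule lborel_pair.Fubini_integrable)
    show "integrable lborel (\<lambda>x. LINT y|lborel. norm (case (x, y) of (x, y) \<Rightarrow> a x * b y))"
    proof -
      have "(\<lambda>x. LINT y|lborel. norm (case (x, y) of (x, y) \<Rightarrow> a x * b y)) = (\<lambda>x. \<bar>a x\<bar> * (LINT y|lborel. \<bar>b y\<bar>))"
        by (simp add: abs_mult)
      then show ?thesis using integrable_mult_left[OF integrable_abs[OF a]] by simp
    qed
    show "AE x in lborel. integrable lborel (\<lambda>y. case (x, y) of (x, y) \<Rightarrow> a x * b y)"
      using b by simp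
  qed measurable
  show ?thesis
    by (rule Bochner_Integration.integrable_bound[OF G F]) (auto intro!: AE_I2 order_trans[OF bnd])
qed

lemma fourier_measurable[measurable]:
  assumes [measurable]: "g \<in> borel_measurable lborel"
  shows "fourier g \<in> borel_measurable lborel"
  unfolding fourier_def[abs_def] by measurable

lemma fourier_bound:
  assumes "integrable lborel g"
  shows "norm (fourier g \<theta>) \<le> (LINT x|lborel. norm (g x))"
  unfolding fourier_def
  by (rule order_trans[OF integral_norm_bound]) (simp add: norm_mult)



lemma L_inv:
  fixes g :: "real \<Rightarrow> complex"
  assumes g: "integrable lborel g" and s: "s > 0"
  shows "(LINT \<theta>|lborel. fourier g \<theta> * (exp (\<i> * complex_of_real (-(\<theta> * x))) * complex_of_real (std_normal_density (s*\<theta>))))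
       = (LINT y|lborel. g y * complex_of_real (gk s (y - x)))"
proof -
  have [measurable]: "g \<in> borel_measurable lborel" using g by auto
  define F where "F = (\<lambda>\<theta> y. exp (\<i> * complex_of_real (\<theta> * y)) * g y * (exp (\<i> * complex_of_real (-(\<theta> * x))) * complex_of_real (std_normal_density (s*\<theta>))))"
  have int: "integrable (lborel \<Otimes>\<^sub>M lborel) (case_prod F)"
  proof (rule prod_bound_integrable[where a="\<lambda>\<theta>. std_normal_density (s*\<theta>)" and b="\<lambda>y. norm (g y)"])
    show "case_prod F \<in> borel_measurable (lborel \<Otimes>\<^sub>M lborel)"
      unfolding F_def by measurable
    show "integrable lborel (\<lambda>\<theta>. std_normal_density (s*\<theta>))" using snd_integrable[OF s] .
    show "integrable lborel (\<lambda>y. norm (g y))" using g by auto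
    fix a b show "norm (case_prod F (a, b)) \<le> std_normal_density (s * a) * norm (g b)"
      unfolding F_def by (simp add: norm_mult)
  qed
  have "(LINT \<theta>|lborel. fourier g \<theta> * (exp (\<i> * complex_of_real (-(\<theta> * x))) * complex_of_real (std_normal_density (s*\<theta>))))
      = (LINT \<theta>|lborel. LINT y|lborel. F \<theta> y)"
    unfolding fourier_def F_def by (simp add: integral_mult_left_zero)
  also have "\<dots> = (LINT y|lborel. LINT \<theta>|lborel. F \<theta> y)"
    using lborel_pair.Fubini_integral[OF int] by simp
  also have "\<dots> = (LINT y|lborel. g y * (LINT \<theta>|lborel. exp (\<i> * complex_of_real (\<theta> * (y - x))) * complex_of_real (std_normal_density (s*\<theta>))))"
  proof (intro Bochner_Integration.integral_cong refl)
    fix y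
    have "(LINT \<theta>|lborel. F \<theta> y) = (LINT \<theta>|lborel. g y * (exp (\<i> * complex_of_real (\<theta> * (y - x))) * complex_of_real (std_normal_density (s*\<theta>))))"
    proof (intro Bochner_Integration.integral_cong refl)
      fix \<theta>
      have "exp (\<i> * complex_of_real (\<theta> * y)) * exp (\<i> * complex_of_real (-(\<theta> * x))) = exp (\<i> * complex_of_real (\<theta> * (y - x)))"
        by (simp add: exp_add[symmetric] algebra_simps)
      then show "F \<theta> y = g y * (exp (\<i> * complex_of_real (\<theta> * (y - x))) * complex_of_real (std_normal_density (s*\<theta>)))"
        unfolding F_def by (metis (no_types, lifting) mult.assoc mult.left_commute)
    qed
    then show "(LINT \<theta>|lborel. F \<theta> y) = g y * (LINT \<theta>|lborel. exp (\<i> * complex_of_real (\<theta> * (y - x))) * complex_of_real (std_normal_density (s*\<theta>)))"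
      by simp
  qed
  also have "\<dots> = (LINT y|lborel. g y * complex_of_real (gk s (y - x)))"
    by (simp only: gauss_ft[OF s])
  finally show ?thesis .
qed



lemma trans_int:
  fixes g :: "real \<Rightarrow> complex"
  shows "integrable lborel g \<Longrightarrow> integrable lborel (\<lambda>x. g (x - y))"
    and "(LINT x|lborel. g (x - y)) = (LINT x|lborel. g x)"
proof -
  show "integrable lborel g \<Longrightarrow> integrable lborel (\<lambda>x. g (x - y))"
    using lborel_integrable_real_affine[of g 1 "-y"] by simp
  show "(LINT x|lborel. g (x - y)) = (LINT x|lborel. g x)"
    using lborel_integral_real_affine[of 1 g "-y"] by simp
qed

lemma trans_int_real:
  fixes g :: "real \<Rightarrow> real"
  shows "(LINT x|lborel. g (x - y)) = (LINT x|lborel. g x)"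
    using lborel_integral_real_affine[of 1 g "-y"] by simp

lemma conv_facts:
  fixes g h :: "real \<Rightarrow> complex"
  assumes g: "integrable lborel g" and h: "integrable lborel h"
  shows "integrable lborel (conv g h)" and "fourier (conv g h) \<theta> = fourier g \<theta> * fourier h \<theta>"
proof -
  have [measurable]: "g \<in> borel_measurable lborel" "h \<in> borel_measurable lborel" using g h by auto
  have intG: "integrable (lborel \<Otimes>\<^sub>M lborel) (\<lambda>(y,x). g (x - y) * h y)"
  proof (rule lborel_pair.Fubini_integrable)
    have "(\<lambda>y. LINT x|lborel. norm (case (y, x) of (y, x) \<Rightarrow> g (x - y) * h y)) = (\<lambda>y. norm (h y) * (LINT x|lborel. norm (g x)))"
    proof
      fix y
      have "(LINT x|lborel. norm (case (y, x) of (y, x) \<Rightarrow> g (x - y) * h y)) = (LINT x|lborel. norm (g (x - y))) * norm (h y)"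
        by (simp add: norm_mult)
      also have "\<dots> = (LINT x|lborel. norm (g x)) * norm (h y)"
        using trans_int_real[of "\<lambda>x. norm (g x)" y] by simp
      finally show "(LINT x|lborel. norm (case (y, x) of (y, x) \<Rightarrow> g (x - y) * h y)) = norm (h y) * (LINT x|lborel. norm (g x))"
        by simp
    qed
    then show "integrable lborel (\<lambda>y. LINT x|lborel. norm (case (y, x) of (y, x) \<Rightarrow> g (x - y) * h y))"
      using h by simp
    show "AE y in lborel. integrable lborel (\<lambda>x. case (y, x) of (y, x) \<Rightarrow> g (x - y) * h y)"
      using trans_int(1)[OF g] by simp
  qed measurable
  have intF: "integrable (lborel \<Otimes>\<^sub>M lborel) (\<lambda>(x,y). g (x - y) * h y)"
    using lborel_pair.integrable_product_swap[OF intG] by (simp add: case_prod_beta)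
  show "integrable lborel (conv g h)"
    unfolding conv_def[abs_def] using lborel_pair.integrable_fst[of "\<lambda>x y. g (x - y) * h y"] intF by simp
  define E where "E = (\<lambda>x y. exp (\<i> * complex_of_real (\<theta> * x)) * (g (x - y) * h y))"
  have intE: "integrable (lborel \<Otimes>\<^sub>M lborel) (case_prod E)"
    by (rule Bochner_Integration.integrable_bound[OF intF]) (auto simp: E_def norm_mult)
  have "fourier (conv g h) \<theta> = (LINT x|lborel. LINT y|lborel. E x y)"
    unfolding fourier_def conv_def E_def by simp
  also have "\<dots> = (LINT y|lborel. LINT x|lborel. E x y)"
    using lborel_pair.Fubini_integral[OF intE] by simp
  also have "\<dots> = (LINT y|lborel. fourier g \<theta> * (exp (\<i> * complex_of_real (\<theta> * y)) * h y))"
  proof (intro Bochner_Integration.integral_cong refl)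
    fix y
    have "(LINT x|lborel. E x y) = (LINT x|lborel. (exp (\<i> * complex_of_real (\<theta> * y)) * h y) * (exp (\<i> * complex_of_real (\<theta> * (x - y))) * g (x - y)))"
    proof (intro Bochner_Integration.integral_cong refl)
      fix x
      have "exp (\<i> * complex_of_real (\<theta> * x)) = exp (\<i> * complex_of_real (\<theta> * y)) * exp (\<i> * complex_of_real (\<theta> * (x - y)))"
        by (simp add: exp_add[symmetric] algebra_simps)
      then show "E x y = (exp (\<i> * complex_of_real (\<theta> * y)) * h y) * (exp (\<i> * complex_of_real (\<theta> * (x - y))) * g (x - y))"
        unfolding E_def by (simp add: algebra_simps)
    qed
    also have "\<dots> = (exp (\<i> * complex_of_real (\<theta> * y)) * h y) * (LINT x|lborel. exp (\<i> * complex_of_real (\<theta> * (x - y))) * g (x - y))"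
      by simp
    also have "\<dots> = (exp (\<i> * complex_of_real (\<theta> * y)) * h y) * fourier g \<theta>"
      using trans_int(2)[of "\<lambda>u. exp (\<i> * complex_of_real (\<theta> * u)) * g u" y] unfolding fourier_def by simp
    finally show "(LINT x|lborel. E x y) = fourier g \<theta> * (exp (\<i> * complex_of_real (\<theta> * y)) * h y)"
      by simp
  qed
  also have "\<dots> = fourier g \<theta> * fourier h \<theta>"
    unfolding fourier_def by simp
  finally show "fourier (conv g h) \<theta> = fourier g \<theta> * fourier h \<theta>" .
qed

lemma conv_pow_facts:
  assumes f: "integrable lborel f"
  shows "integrable lborel (conv_pow f (Suc k)) \<and> (\<forall>\<theta>. fourier (conv_pow f (Suc k)) \<theta> = fourier f \<theta> ^ Suc k)"
proof (induction k)
  case 0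
  then show ?case using f by simp
next
  case (Suc k)
  then show ?case using conv_facts[OF _ f, of "conv_pow f (Suc k)"] by simp
qed



lemma gk_le: "s > 0 \<Longrightarrow> gk s z \<le> 1/s"
  by (simp add: gk_def divide_right_mono)

lemma step1:
  fixes g :: "real \<Rightarrow> complex"
  assumes g: "integrable lborel g" and F: "integrable lborel (fourier g)" and s: "s > 0"
  shows "norm (LINT y|lborel. g y * complex_of_real (gk s (y - x))) \<le> (LINT \<theta>|lborel. norm (fourier g \<theta>))"
proof -
  have [measurable]: "g \<in> borel_measurable lborel" using g by auto
  let ?f = "\<lambda>\<theta>. fourier g \<theta> * (exp (\<i> * complex_of_real (-(\<theta> * x))) * complex_of_real (std_normal_density (s*\<theta>)))"
  have nb: "norm (?f \<theta>) \<le> norm (fourier g \<theta>)" for \<theta>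
    using snd_le[of "s*\<theta>"] by (simp add: norm_mult mult_left_le)
  have nb': "norm (?f \<theta>) \<le> norm (norm (fourier g \<theta>))" for \<theta>
    using nb by (simp only: real_norm_def abs_norm_cancel)
  have "integrable lborel ?f"
  proof (rule Bochner_Integration.integrable_bound[OF integrable_norm[OF F]])
    show "?f \<in> borel_measurable lborel" by measurable
    show "AE \<theta> in lborel. norm (?f \<theta>) \<le> norm (norm (fourier g \<theta>))"
      by (intro AE_I2 nb')
  qed
  then have "norm (LINT \<theta>|lborel. ?f \<theta>) \<le> (LINT \<theta>|lborel. norm (fourier g \<theta>))"
    using F nb by (intro Bochner_Integration.integral_norm_bound_integral) auto
  then show ?thesis using L_inv[OF g s, of x] by simp
qed

lemma step2:
  fixes g :: "real \<Rightarrow> complex"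
  assumes g: "integrable lborel g" and F: "integrable lborel (fourier g)" and s: "s > 0" and ab: "a \<le> b"
  shows "norm (LINT y|lborel. g y * complex_of_real (LINT x|lborel. indicator {a..b} x * gk s (y - x)))
     \<le> (LINT \<theta>|lborel. norm (fourier g \<theta>)) * (b - a)"
proof -
  have [measurable]: "g \<in> borel_measurable lborel" using g by auto
  define M where "M = (LINT \<theta>|lborel. norm (fourier g \<theta>))"
  define H where "H = (\<lambda>x y. complex_of_real (indicator {a..b} x) * (g y * complex_of_real (gk s (y - x))))"
  have indint: "integrable lborel (indicator {a..b} :: real \<Rightarrow> real)"
    by (simp add: ab)
  have intH: "integrable (lborel \<Otimes>\<^sub>M lborel) (case_prod H)"
  proof (rule prod_bound_integrable[where a="\<lambda>x. indicator {a..b} x * (1/s)" and b="\<lambda>y. norm (g y)"])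
    show "case_prod H \<in> borel_measurable (lborel \<Otimes>\<^sub>M lborel)"
      unfolding H_def by measurable
    show "integrable lborel (\<lambda>x. indicator {a..b} x * (1/s))"
      by (rule integrable_mult_left[OF indint])
    show "integrable lborel (\<lambda>y. norm (g y))" using g by auto
    fix x y
    have l: "gk s (y - x) \<le> 1/s" using gk_le[OF s] .
    have p: "0 \<le> gk s (y - x)" using gk_pos[OF s] by (simp add: less_imp_le)
    have "norm (g y) * gk s (y - x) \<le> norm (g y) * (1/s)"
      by (rule mult_left_mono[OF l]) simp
    then show "norm (case_prod H (x, y)) \<le> indicator {a..b} x * (1/s) * norm (g y)"
      unfolding H_def using p by (auto simp: norm_mult indicator_def mult.commute)
  qed
  have "(LINT y|lborel. g y * complex_of_real (LINT x|lborel. indicator {a..b} x * gk s (y - x)))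
       = (LINT y|lborel. LINT x|lborel. H x y)"
  proof (intro Bochner_Integration.integral_cong refl)
    fix y
    have "(LINT x|lborel. H x y) = (LINT x|lborel. g y * complex_of_real (indicator {a..b} x * gk s (y - x)))"
      unfolding H_def by (intro Bochner_Integration.integral_cong refl) (simp add: ac_simps)
    also have "\<dots> = g y * complex_of_real (LINT x|lborel. indicator {a..b} x * gk s (y - x))"
      by (simp only: integral_mult_right_zero integral_complex_of_real)
    finally show "g y * complex_of_real (LINT x|lborel. indicator {a..b} x * gk s (y - x)) = (LINT x|lborel. H x y)"
      by simp
  qed
  also have "\<dots> = (LINT x|lborel. LINT y|lborel. H x y)"
    using lborel_pair.Fubini_integral[OF intH] by simp
  finally have eq: "(LINT y|lborel. g y * complex_of_real (LINT x|lborel. indicator {a..b} x * gk s (y - x)))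
       = (LINT x|lborel. LINT y|lborel. H x y)" .
  have "norm (LINT x|lborel. LINT y|lborel. H x y) \<le> (LINT x|lborel. indicator {a..b} x * M)"
  proof (rule Bochner_Integration.integral_norm_bound_integral)
    show "integrable lborel (\<lambda>x. LINT y|lborel. H x y)"
      using lborel_pair.integrable_fst[OF intH] .
    show "integrable lborel (\<lambda>x. indicator {a..b} x * M)"
      using integrable_mult_left[OF indint] .
    fix x
    have "(LINT y|lborel. H x y) = complex_of_real (indicator {a..b} x) * (LINT y|lborel. g y * complex_of_real (gk s (y - x)))"
      unfolding H_def by simp
    then show "norm (LINT y|lborel. H x y) \<le> indicator {a..b} x * M"
      using step1[OF g F s, of x] unfolding M_def by (auto simp: norm_mult indicator_def)
  qed
  also have "\<dots> = M * (b - a)"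
    using ab by simp
  finally show ?thesis using eq unfolding M_def by simp
qed

lemma step3:
  assumes s: "s > 0"
  shows "(LINT x|lborel. indicator {a..b} x * gk s (y - x)) = (LINT t|lborel. indicator {a..b} (y - s*t) * exp (-(t^2)/2))"
proof -
  have "(LINT x|lborel. indicator {a..b} x * gk s (y - x)) = \<bar>-s\<bar> *\<^sub>R (LINT t|lborel. indicator {a..b} (y + -s*t) * gk s (y - (y + -s*t)))"
    using s by (intro lborel_integral_real_affine) auto
  also have "\<dots> = s * (LINT t|lborel. (1/s) * (indicator {a..b} (y - s*t) * exp (-(t^2)/2)))"
    using s by (auto simp: gk_def intro!: Bochner_Integration.integral_cong)
  also have "\<dots> = (LINT t|lborel. indicator {a..b} (y - s*t) * exp (-(t^2)/2))"
    using s by simp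
  finally show ?thesis .
qed

lemma gauss_int: "integrable lborel (\<lambda>t. exp (-(t^2)/2::real))" "(LINT t|lborel. exp (-(t^2)/2::real)) = sqrt (2*pi)"
  using gk_integrable[of 1 0] gk_integral[of 1 0] by (simp_all add: gk_def)

lemma ind_lim:
  fixes y a b :: real
  assumes "y \<noteq> a" "y \<noteq> b" and X: "X \<longlonglongrightarrow> y"
  shows "(\<lambda>n. indicator {a..b} (X n) :: real) \<longlonglongrightarrow> indicator {a..b} y"
proof (cases "y \<in> {a..b}")
  case True
  then have y: "y \<in> {a<..<b}" using assms by auto
  have "eventually (\<lambda>n. X n \<in> {a<..<b}) sequentially"
    by (rule topological_tendstoD[OF X open_greaterThanLessThan y])
  then have "eventually (\<lambda>n. indicator {a..b} (X n) = (indicator {a..b} y :: real)) sequentially"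
  proof (rule eventually_mono)
    fix n assume "X n \<in> {a<..<b}"
    then show "indicator {a..b} (X n) = (indicator {a..b} y :: real)"
      using True by (simp add: indicator_def)
  qed
  then show ?thesis by (rule tendsto_eventually)
next
  case False
  have o: "open (- {a..b::real})" by (simp add: open_Compl)
  have "eventually (\<lambda>n. X n \<in> - {a..b}) sequentially"
    by (rule topological_tendstoD[OF X o]) (use False in simp)
  then have "eventually (\<lambda>n. indicator {a..b} (X n) = (indicator {a..b} y :: real)) sequentially"
  proof (rule eventually_mono)
    fix n assume "X n \<in> - {a..b}"
    then show "indicator {a..b} (X n) = (indicator {a..b} y :: real)"
      using False by (auto simp: indicator_def)
  qed
  then show ?thesis by (rule tendsto_eventually)
qed

lemma sn_lim: "(\<lambda>n. 1 / real (Suc n)) \<longlonglongrightarrow> 0"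
  using LIMSEQ_Suc[OF lim_1_over_n] by simp

lemma step4:
  fixes y a b :: real
  assumes "y \<noteq> a" "y \<noteq> b"
  shows "(\<lambda>n. LINT x|lborel. indicator {a..b} x * gk (1 / real (Suc n)) (y - x)) \<longlonglongrightarrow> indicator {a..b} y * sqrt (2*pi)"
proof -
  define e where "e = (\<lambda>t::real. exp (-(t^2)/2))"
  have [measurable]: "e \<in> borel_measurable borel" unfolding e_def by measurable
  have lim: "(\<lambda>n. LINT t|lborel. indicator {a..b} (y - (1 / real (Suc n))*t) * e t) \<longlonglongrightarrow> (LINT t|lborel. indicator {a..b} y * e t)"
  proof (rule integral_dominated_convergence[where w="e"])
    show "integrable lborel e" using gauss_int(1) unfolding e_def .
    show "AE t in lborel. (\<lambda>n. indicator {a..b} (y - (1 / real (Suc n))*t) * e t) \<longlonglongrightarrow> indicator {a..b} y * e t"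
    proof (rule AE_I2, rule tendsto_mult[OF _ tendsto_const], rule ind_lim[OF assms])
      fix t :: real
      show "(\<lambda>n. y - 1 / real (Suc n) * t) \<longlonglongrightarrow> y"
        using tendsto_diff[OF tendsto_const tendsto_mult[OF sn_lim tendsto_const, of t], of y] by simp
    qed
    show "(\<lambda>t. indicator {a..b} y * e t) \<in> borel_measurable lborel" by measurable
    fix n
    show "(\<lambda>t. indicator {a..b} (y - (1 / real (Suc n))*t) * e t) \<in> borel_measurable lborel" by measurable
    have "e t \<ge> 0" for t unfolding e_def by simp
    then show "AE t in lborel. norm (indicator {a..b} (y - (1 / real (Suc n))*t) * e t) \<le> e t"
      by (intro AE_I2) (simp add: indicator_def)
  qed
  have eq2: "(LINT t|lborel. indicator {a..b} y * e t) = indicator {a..b} y * sqrt (2*pi)"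
    using gauss_int(2) unfolding e_def by (simp only: integral_mult_right_zero)
  have eq3: "(\<lambda>n. LINT x|lborel. indicator {a..b} x * gk (1 / real (Suc n)) (y - x)) = (\<lambda>n. LINT t|lborel. indicator {a..b} (y - (1 / real (Suc n))*t) * e t)"
    unfolding e_def by (rule ext, rule step3) simp
  show ?thesis using lim[unfolded eq2] unfolding eq3 .
qed



lemma Psi_bounds:
  assumes s: "s > 0"
  shows "0 \<le> (LINT x|lborel. indicator {a..b} x * gk s (y - x))"
    and "(LINT x|lborel. indicator {a..b} x * gk s (y - x)) \<le> sqrt (2*pi)"
proof -
  show "0 \<le> (LINT x|lborel. indicator {a..b} x * gk s (y - x))"
    by (rule Bochner_Integration.integral_nonneg) (use gk_pos[OF s] in \<open>simp add: less_imp_le\<close>)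
  have "(LINT t|lborel. indicator {a..b} (y - s*t) * exp (-(t^2)/2)) \<le> (LINT t|lborel. exp (-(t^2)/2::real))"
    by (rule integral_mono'[OF gauss_int(1)]) (auto simp: indicator_def)
  then show "(LINT x|lborel. indicator {a..b} x * gk s (y - x)) \<le> sqrt (2*pi)"
    using step3[OF s, of a b y] gauss_int(2) by simp
qed

lemma step5:
  fixes g :: "real \<Rightarrow> complex"
  assumes g: "integrable lborel g" and F: "integrable lborel (fourier g)" and ab: "a \<le> b"
  shows "norm (LINT y|lborel. indicator {a..b} y *\<^sub>R g y) \<le> (LINT \<theta>|lborel. norm (fourier g \<theta>)) / sqrt (2*pi) * (b - a)"
proof -
  have [measurable]: "g \<in> borel_measurable lborel" using g by auto
  define M where "M = (LINT \<theta>|lborel. norm (fourier g \<theta>))"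
  define P where "P = (\<lambda>n y. LINT x|lborel. indicator {a..b} x * gk (1 / real (Suc n)) (y - x))"
  have sn: "1 / real (Suc n) > 0" for n by simp
  have Pm[measurable]: "P n \<in> borel_measurable lborel" for n
    unfolding P_def by measurable
  have lim: "(\<lambda>n. LINT y|lborel. g y * complex_of_real (P n y)) \<longlonglongrightarrow> (LINT y|lborel. g y * complex_of_real (indicator {a..b} y * sqrt (2*pi)))"
  proof (rule integral_dominated_convergence[where w="\<lambda>y. norm (g y) * sqrt (2*pi)"])
    show "integrable lborel (\<lambda>y. norm (g y) * sqrt (2*pi))" using g by auto
    show "(\<lambda>y. g y * complex_of_real (indicator {a..b} y * sqrt (2*pi))) \<in> borel_measurable lborel"
      by measurable
    fix n
    show "(\<lambda>y. g y * complex_of_real (P n y)) \<in> borel_measurable lborel" by measurable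
    show "AE y in lborel. norm (g y * complex_of_real (P n y)) \<le> norm (g y) * sqrt (2*pi)"
    proof (rule AE_I2)
      fix y
      have "0 \<le> P n y" "P n y \<le> sqrt (2*pi)" unfolding P_def using Psi_bounds[OF sn] by auto
      then show "norm (g y * complex_of_real (P n y)) \<le> norm (g y) * sqrt (2*pi)"
        by (simp add: norm_mult mult_left_mono)
    qed
  next
    show "AE y in lborel. (\<lambda>n. g y * complex_of_real (P n y)) \<longlonglongrightarrow> g y * complex_of_real (indicator {a..b} y * sqrt (2*pi))"
      using AE_lborel_singleton[of a] AE_lborel_singleton[of b]
    proof eventually_elim
      case (elim y)
      then show ?case unfolding P_def
        by (intro tendsto_mult[OF tendsto_const] tendsto_of_real step4) auto
    qed
  qed
  have bnd: "norm (LINT y|lborel. g y * complex_of_real (P n y)) \<le> M * (b - a)" for n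
    unfolding P_def M_def using step2[OF g F sn ab] .
  have "norm (LINT y|lborel. g y * complex_of_real (indicator {a..b} y * sqrt (2*pi))) \<le> M * (b - a)"
    by (rule LIMSEQ_le_const2[OF tendsto_norm[OF lim]]) (use bnd in auto)
  moreover have "(LINT y|lborel. g y * complex_of_real (indicator {a..b} y * sqrt (2*pi))) = (LINT y|lborel. complex_of_real (sqrt (2*pi)) * (indicator {a..b} y *\<^sub>R g y))"
    by (intro Bochner_Integration.integral_cong refl) (simp add: scaleR_conv_of_real ac_simps)
  moreover have "(LINT y|lborel. complex_of_real (sqrt (2*pi)) * (indicator {a..b} y *\<^sub>R g y)) = complex_of_real (sqrt (2*pi)) * (LINT y|lborel. indicator {a..b} y *\<^sub>R g y)"
    by (rule integral_mult_right_zero)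
  ultimately have "sqrt (2*pi) * norm (LINT y|lborel. indicator {a..b} y *\<^sub>R g y) \<le> M * (b - a)"
    by (simp add: norm_mult)
  then show ?thesis unfolding M_def[symmetric]
    by (simp add: field_simps)
qed

lemma bounded_from_ft:
  fixes g :: "real \<Rightarrow> complex"
  assumes g: "integrable lborel g" and F: "integrable lborel (fourier g)"
  shows "\<exists>C. AE x in lborel. norm (g x) \<le> C"
proof -
  define K where "K = (LINT \<theta>|lborel. norm (fourier g \<theta>)) / sqrt (2*pi)"
  have si: "set_integrable lborel S g" if "S \<in> sets borel" for S
    unfolding set_integrable_def using integrable_mult_indicator[OF _ g, of S] that by simp
  have "g integrable_on cbox a b" for a b :: real
    using set_borel_integral_eq_integral(1)[OF si[of "cbox a b"]] by simp
  then obtain N where N: "negligible N"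
    and Nd: "\<And>x e. \<lbrakk>x \<notin> N; 0 < e\<rbrakk> \<Longrightarrow> \<exists>d>0. \<forall>h. 0 < h \<and> h < d \<longrightarrow>
                         norm(integral (cbox x (x + h *\<^sub>R One)) g /\<^sub>R h ^ DIM(real) - g x) < e"
    using integrable_ccontinuous_explicit[of g] by metis
  have pt: "norm (g x) \<le> K" if xN: "x \<notin> N" for x
  proof (rule ccontr)
    assume "\<not> norm (g x) \<le> K"
    then have e: "norm (g x) - K > 0" by simp
    obtain d where d: "d > 0" and dd: "\<And>h. 0 < h \<and> h < d \<Longrightarrow>
        norm(integral (cbox x (x + h *\<^sub>R One)) g /\<^sub>R h ^ DIM(real) - g x) < norm (g x) - K"
      using Nd[OF xN e] by blast
    define h where "h = d/2"
    have h: "0 < h" "h < d" using d by (auto simp: h_def)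
    have "integral (cbox x (x + h *\<^sub>R One)) g = integral {x..x+h} g"
      by (simp add: cbox_interval)
    also have "\<dots> = (LINT y|lborel. indicator {x..x+h} y *\<^sub>R g y)"
      using set_borel_integral_eq_integral(2)[OF si[of "{x..x+h}"]] by (simp add: set_lebesgue_integral_def)
    finally have I: "integral (cbox x (x + h *\<^sub>R One)) g = (LINT y|lborel. indicator {x..x+h} y *\<^sub>R g y)" .
    have "norm (LINT y|lborel. indicator {x..x+h} y *\<^sub>R g y) \<le> K * h"
      using step5[OF g F, of x "x+h"] h unfolding K_def by simp
    then have n1: "norm (integral (cbox x (x + h *\<^sub>R One)) g /\<^sub>R h ^ DIM(real)) \<le> K"
      using h unfolding I by (simp add: field_simps)
    have "norm (g x) - K \<le> norm(integral (cbox x (x + h *\<^sub>R One)) g /\<^sub>R h ^ DIM(real) - g x)"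
      using n1 norm_triangle_ineq3[of "g x" "integral (cbox x (x + h *\<^sub>R One)) g /\<^sub>R h ^ DIM(real)"]
      by (simp add: norm_minus_commute)
    then show False using dd[OF conjI[OF h]] by simp
  qed
  have "N \<in> null_sets lebesgue" using N negligible_iff_null_sets by blast
  then have "AE x in lebesgue. x \<notin> N" by (rule AE_not_in)
  then have "AE x in lborel. x \<notin> N" by (simp add: AE_completion_iff)
  then have "AE x in lborel. norm (g x) \<le> K" by eventually_elim (rule pt)
  then show ?thesis by blast
qed



lemma borel_measurable_cnj'[measurable]:
  fixes f :: "'a \<Rightarrow> complex"
  shows "f \<in> borel_measurable M \<Longrightarrow> (\<lambda>x. cnj (f x)) \<in> borel_measurable M"
  by (rule borel_measurable_continuous_on[where f=cnj]) (auto intro: continuous_on_cnj[OF continuous_on_id])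

lemma J_bound:
  fixes h :: "real \<Rightarrow> complex"
  assumes h: "integrable lborel h" and C: "AE x in lborel. norm (h x) \<le> C" and C0: "0 \<le> C" and s: "s > 0"
  shows "(LINT \<theta>|lborel. norm (fourier h \<theta>)^2 * std_normal_density (s*\<theta>)) \<le> C * sqrt (2*pi) * (LINT x|lborel. norm (h x))"
proof -
  have [measurable]: "h \<in> borel_measurable lborel" using h by auto
  have [measurable]: "fourier h \<in> borel_measurable lborel" by measurable
  define B where "B = (LINT x|lborel. norm (h x))"
  define Q where "Q = (\<lambda>x. LINT y|lborel. h y * complex_of_real (gk s (y - x)))"
  have Qm[measurable]: "Q \<in> borel_measurable lborel" unfolding Q_def by measurable
  have gk0: "0 \<le> gk s z" for z using gk_pos[OF s] by (simp add: less_imp_le)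
  have Qb: "norm (Q x) \<le> C * sqrt (2*pi)" for x
  proof -
    have i1: "integrable lborel (\<lambda>y. norm (h y) * gk s (y - x))"
    proof (rule Bochner_Integration.integrable_bound[OF integrable_mult_left[OF integrable_norm[OF h], of "1/s"]])
      show "(\<lambda>y. norm (h y) * gk s (y - x)) \<in> borel_measurable lborel" by measurable
      show "AE y in lborel. norm (norm (h y) * gk s (y - x)) \<le> norm (norm (h y) * (1/s))"
      proof (rule AE_I2)
        fix y
        have "norm (h y) * gk s (y - x) \<le> norm (h y) * (1/s)"
          by (rule mult_left_mono[OF gk_le[OF s]]) simp
        then show "norm (norm (h y) * gk s (y - x)) \<le> norm (norm (h y) * (1/s))"
          using gk0[of "y - x"] s by simp
      qed
    qed
    have "norm (Q x) \<le> (LINT y|lborel. norm (h y * complex_of_real (gk s (y - x))))"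
      unfolding Q_def by (rule integral_norm_bound)
    also have "\<dots> = (LINT y|lborel. norm (h y) * gk s (y - x))"
      using gk0 by (simp add: norm_mult)
    also have "\<dots> \<le> (LINT y|lborel. C * gk s (y - x))"
    proof (rule integral_mono_AE[OF i1])
      show "integrable lborel (\<lambda>y. C * gk s (y - x))"
        using gk_integrable[OF s] by simp
      show "AE y in lborel. norm (h y) * gk s (y - x) \<le> C * gk s (y - x)"
        using C by eventually_elim (rule mult_right_mono[OF _ gk0])
    qed
    also have "\<dots> = C * sqrt (2*pi)"
      using gk_integral[OF s] by simp
    finally show ?thesis .
  qed
  define E where "E = (\<lambda>\<theta> x. exp (\<i> * complex_of_real (\<theta> * x)) * h x * (cnj (fourier h \<theta>) * complex_of_real (std_normal_density (s*\<theta>))))"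
  have intE: "integrable (lborel \<Otimes>\<^sub>M lborel) (case_prod E)"
  proof (rule prod_bound_integrable[where a="\<lambda>\<theta>. B * std_normal_density (s*\<theta>)" and b="\<lambda>x. norm (h x)"])
    show "case_prod E \<in> borel_measurable (lborel \<Otimes>\<^sub>M lborel)"
      unfolding E_def by measurable
    show "integrable lborel (\<lambda>\<theta>. B * std_normal_density (s*\<theta>))"
      using snd_integrable[OF s] by simp
    show "integrable lborel (\<lambda>x. norm (h x))" using h by auto
    fix \<theta> x
    have "norm (fourier h \<theta>) \<le> B" unfolding B_def by (rule fourier_bound[OF h])
    then have "norm (fourier h \<theta>) * std_normal_density (s*\<theta>) \<le> B * std_normal_density (s*\<theta>)"
      by (rule mult_right_mono) simp
    then have "norm (h x) * (norm (fourier h \<theta>) * std_normal_density (s*\<theta>)) \<le> norm (h x) * (B * std_normal_density (s*\<theta>))"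
      by (rule mult_left_mono) simp
    then show "norm (case_prod E (\<theta>, x)) \<le> B * std_normal_density (s*\<theta>) * norm (h x)"
      unfolding E_def by (simp add: norm_mult ac_simps)
  qed
  have "complex_of_real (LINT \<theta>|lborel. norm (fourier h \<theta>)^2 * std_normal_density (s*\<theta>))
      = (LINT \<theta>|lborel. fourier h \<theta> * (cnj (fourier h \<theta>) * complex_of_real (std_normal_density (s*\<theta>))))"
  proof -
    have "complex_of_real (LINT \<theta>|lborel. norm (fourier h \<theta>)^2 * std_normal_density (s*\<theta>))
       = (LINT \<theta>|lborel. complex_of_real (norm (fourier h \<theta>)^2 * std_normal_density (s*\<theta>)))"
      by (rule integral_complex_of_real[symmetric])
    also have "\<dots> = (LINT \<theta>|lborel. fourier h \<theta> * (cnj (fourier h \<theta>) * complex_of_real (std_normal_density (s*\<theta>))))"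
      by (intro Bochner_Integration.integral_cong refl) (simp only: of_real_mult complex_norm_square mult.assoc)
    finally show ?thesis .
  qed
  also have "\<dots> = (LINT \<theta>|lborel. LINT x|lborel. E \<theta> x)"
    unfolding fourier_def E_def by (simp add: integral_mult_left_zero)
  also have "\<dots> = (LINT x|lborel. LINT \<theta>|lborel. E \<theta> x)"
    using lborel_pair.Fubini_integral[OF intE] by simp
  also have "\<dots> = (LINT x|lborel. h x * cnj (Q x))"
  proof (intro Bochner_Integration.integral_cong refl)
    fix x
    have "(LINT \<theta>|lborel. E \<theta> x) = (LINT \<theta>|lborel. h x * cnj (fourier h \<theta> * (exp (\<i> * complex_of_real (-(\<theta> * x))) * complex_of_real (std_normal_density (s*\<theta>)))))"
      unfolding E_def by (intro Bochner_Integration.integral_cong refl) (simp add: exp_cnj ac_simps)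
    also have "\<dots> = h x * cnj (LINT \<theta>|lborel. fourier h \<theta> * (exp (\<i> * complex_of_real (-(\<theta> * x))) * complex_of_real (std_normal_density (s*\<theta>))))"
      by (simp only: integral_mult_right_zero Bochner_Integration.integral_cnj)
    also have "\<dots> = h x * cnj (Q x)"
      unfolding Q_def by (simp only: L_inv[OF h s])
    finally show "(LINT \<theta>|lborel. E \<theta> x) = h x * cnj (Q x)" .
  qed
  finally have eqJ: "complex_of_real (LINT \<theta>|lborel. norm (fourier h \<theta>)^2 * std_normal_density (s*\<theta>)) = (LINT x|lborel. h x * cnj (Q x))" .
  have "norm (LINT x|lborel. h x * cnj (Q x)) \<le> (LINT x|lborel. norm (h x) * (C * sqrt (2*pi)))"
  proof (rule Bochner_Integration.integral_norm_bound_integral)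
    show "integrable lborel (\<lambda>x. norm (h x) * (C * sqrt (2*pi)))" using h by auto
    have nb: "norm (h x * cnj (Q x)) \<le> norm (h x) * (C * sqrt (2*pi))" for x
      using mult_left_mono[OF Qb[of x] norm_ge_zero[of "h x"]] by (simp add: norm_mult)
    then show "norm (h x * cnj (Q x)) \<le> norm (h x) * (C * sqrt (2*pi))" for x .
    show "integrable lborel (\<lambda>x. h x * cnj (Q x))"
    proof (rule Bochner_Integration.integrable_bound[OF integrable_mult_left[OF integrable_norm[OF h], of "C * sqrt (2*pi)"]])
      show "(\<lambda>x. h x * cnj (Q x)) \<in> borel_measurable lborel" by measurable
      show "AE x in lborel. norm (h x * cnj (Q x)) \<le> norm (norm (h x) * (C * sqrt (2*pi)))"
        by (rule AE_I2, rule order_trans[OF nb]) simp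
    qed
  qed
  also have "\<dots> = C * sqrt (2*pi) * B" unfolding B_def by simp
  finally have "norm (complex_of_real (LINT \<theta>|lborel. norm (fourier h \<theta>)^2 * std_normal_density (s*\<theta>))) \<le> C * sqrt (2*pi) * B"
    using eqJ by simp
  moreover have "0 \<le> (LINT \<theta>|lborel. norm (fourier h \<theta>)^2 * std_normal_density (s*\<theta>))"
    by (rule Bochner_Integration.integral_nonneg) simp
  ultimately show ?thesis unfolding B_def by simp
qed



lemma plancherel_bound:
  fixes h :: "real \<Rightarrow> complex"
  assumes h: "integrable lborel h" and C: "AE x in lborel. norm (h x) \<le> C"
  shows "integrable lborel (\<lambda>\<theta>. norm (fourier h \<theta>)^2)"
proof -
  have [measurable]: "h \<in> borel_measurable lborel" using h by auto
  have [measurable]: "fourier h \<in> borel_measurable lborel" by measurable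
  define C' where "C' = max C 0"
  have C': "AE x in lborel. norm (h x) \<le> C'" using C unfolding C'_def by eventually_elim auto
  have C'0: "0 \<le> C'" unfolding C'_def by simp
  define B where "B = (LINT x|lborel. norm (h x))"
  define L where "L = sqrt (2*pi) * (C' * sqrt (2*pi) * B)"
  define u where "u = (\<lambda>n \<theta>. ennreal (norm (fourier h \<theta>)^2 * (sqrt (2*pi) * std_normal_density ((1 / real (Suc n)) * \<theta>))))"
  have um[measurable]: "u n \<in> borel_measurable lborel" for n unfolding u_def by measurable
  have lim: "(\<lambda>n. u n \<theta>) \<longlonglongrightarrow> ennreal (norm (fourier h \<theta>)^2)" for \<theta>
  proof -
    have t: "(\<lambda>n. (1 / real (Suc n)) * \<theta>) \<longlonglongrightarrow> 0"
      using tendsto_mult[OF sn_lim tendsto_const, of \<theta>] by simp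
    have "(\<lambda>n. std_normal_density ((1 / real (Suc n)) * \<theta>)) \<longlonglongrightarrow> std_normal_density 0"
      unfolding std_normal_density_def by (intro tendsto_intros t) simp_all
    then have "(\<lambda>n. norm (fourier h \<theta>)^2 * (sqrt (2*pi) * std_normal_density ((1 / real (Suc n)) * \<theta>)))
        \<longlonglongrightarrow> norm (fourier h \<theta>)^2 * (sqrt (2*pi) * std_normal_density 0)"
      by (intro tendsto_intros)
    moreover have "sqrt (2*pi) * std_normal_density 0 = 1"
      by (simp add: std_normal_density_def)
    ultimately show ?thesis unfolding u_def by (intro tendsto_ennrealI) simp
  qed
  have nn: "integral\<^sup>N lborel (u n) \<le> ennreal L" for n
  proof -
    define s where "s = 1 / real (Suc n)"
    have s: "s > 0" unfolding s_def by simp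
    have fb: "norm (fourier h \<theta>) \<le> B" for \<theta> unfolding B_def by (rule fourier_bound[OF h])
    have B0: "0 \<le> B" unfolding B_def by simp
    have int: "integrable lborel (\<lambda>\<theta>. norm (fourier h \<theta>)^2 * (sqrt (2*pi) * std_normal_density (s * \<theta>)))"
    proof (rule Bochner_Integration.integrable_bound[OF integrable_mult_left[OF snd_integrable[OF s], of "B^2 * sqrt (2*pi)"]])
      show "(\<lambda>\<theta>. norm (fourier h \<theta>)^2 * (sqrt (2*pi) * std_normal_density (s * \<theta>))) \<in> borel_measurable lborel"
        by measurable
      show "AE \<theta> in lborel. norm (norm (fourier h \<theta>)^2 * (sqrt (2*pi) * std_normal_density (s * \<theta>))) \<le> norm (std_normal_density (s * \<theta>) * (B^2 * sqrt (2*pi)))"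
      proof (rule AE_I2)
        fix \<theta>
        have "norm (fourier h \<theta>)^2 \<le> B^2" using fb[of \<theta>] by (simp add: power_mono)
        then have "norm (fourier h \<theta>)^2 * (sqrt (2*pi) * std_normal_density (s * \<theta>)) \<le> B^2 * (sqrt (2*pi) * std_normal_density (s * \<theta>))"
          by (rule mult_right_mono) simp
        then show "norm (norm (fourier h \<theta>)^2 * (sqrt (2*pi) * std_normal_density (s * \<theta>))) \<le> norm (std_normal_density (s * \<theta>) * (B^2 * sqrt (2*pi)))"
          by (simp add: ac_simps)
      qed
    qed
    have "integral\<^sup>N lborel (u n) = ennreal (LINT \<theta>|lborel. norm (fourier h \<theta>)^2 * (sqrt (2*pi) * std_normal_density (s * \<theta>)))"
      unfolding u_def s_def[symmetric] by (rule nn_integral_eq_integral[OF int]) simp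
    also have "(LINT \<theta>|lborel. norm (fourier h \<theta>)^2 * (sqrt (2*pi) * std_normal_density (s * \<theta>)))
        = (LINT \<theta>|lborel. sqrt (2*pi) * (norm (fourier h \<theta>)^2 * std_normal_density (s * \<theta>)))"
      by (intro Bochner_Integration.integral_cong refl) (simp add: ac_simps)
    also have "\<dots> = sqrt (2*pi) * (LINT \<theta>|lborel. norm (fourier h \<theta>)^2 * std_normal_density (s * \<theta>))"
      by (rule integral_mult_right_zero)
    also have "\<dots> \<le> L"
      unfolding L_def B_def by (intro mult_left_mono J_bound[OF h C' C'0 s]) simp
    finally show ?thesis by (simp add: ennreal_leI)
  qed
  have "(\<integral>\<^sup>+\<theta>. ennreal (norm (fourier h \<theta>)^2) \<partial>lborel) = (\<integral>\<^sup>+\<theta>. liminf (\<lambda>n. u n \<theta>) \<partial>lborel)"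
    by (intro nn_integral_cong) (simp add: lim_imp_Liminf[OF _ lim])
  also have "\<dots> \<le> liminf (\<lambda>n. integral\<^sup>N lborel (u n))"
    by (rule nn_integral_liminf) simp
  also have "\<dots> \<le> liminf (\<lambda>n. ennreal L)"
    by (intro Liminf_mono) (use nn in auto)
  also have "\<dots> = ennreal L" by (simp add: Liminf_const)
  finally have fin: "(\<integral>\<^sup>+\<theta>. ennreal (norm (fourier h \<theta>)^2) \<partial>lborel) < \<infinity>"
    by (simp add: le_less_trans)
  show ?thesis
    by (rule integrableI_bounded) (use fin in simp_all)
qed

lemma powr_nat_eq: "0 \<le> (r::real) \<Longrightarrow> 0 < n \<Longrightarrow> r powr (real n) = r ^ n"
  using powr_realpow'[of r n] by simp

lemma pow_le:
  fixes r B p :: real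
  assumes r: "0 \<le> r" "r \<le> B" and p: "0 < p" "p \<le> real k"
  shows "r ^ k \<le> B powr (real k - p) * r powr p"
proof (cases "r = 0")
  case True
  have "k > 0" using p by auto
  then show ?thesis using True by (simp add: zero_power)
next
  case False
  then have r0: "r > 0" using r by simp
  have "r ^ k = r powr (real k)" using powr_realpow[OF r0] by simp
  also have "\<dots> = r powr (real k - p) * r powr p" by (simp add: powr_add[symmetric])
  also have "\<dots> \<le> B powr (real k - p) * r powr p"
    by (intro mult_right_mono powr_mono2) (use r p in auto)
  finally show ?thesis .
qed



theorem lemma1p2:
  fixes f :: "real \<Rightarrow> complex"
  assumes "integrable lborel f"
  shows "(\<exists>k0::nat. k0 \<ge> 1 \<and> in_Linf (conv_pow f k0)) \<longleftrightarrow>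
         (\<exists>p::real. 1 \<le> p \<and> in_Lp p (fourier f))"
proof
  have f: "integrable lborel f" using assms .
  have [measurable]: "f \<in> borel_measurable lborel" using f by auto
  have fm: "fourier f \<in> borel_measurable lborel" by measurable
  assume "\<exists>k0::nat. k0 \<ge> 1 \<and> in_Linf (conv_pow f k0)"
  then obtain k0 where k0: "k0 \<ge> 1" "in_Linf (conv_pow f k0)" by blast
  have ks: "k0 = Suc (k0 - 1)" using k0(1) by simp
  have facts: "integrable lborel (conv_pow f k0)" "\<And>\<theta>. fourier (conv_pow f k0) \<theta> = fourier f \<theta> ^ k0"
    using conv_pow_facts[OF f, of "k0 - 1"] ks[symmetric] by auto
  obtain C where C: "AE x in lborel. norm (conv_pow f k0 x) \<le> C"
    using k0(2) unfolding in_Linf_def by blast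
  have int: "integrable lborel (\<lambda>\<theta>. norm (fourier (conv_pow f k0) \<theta>)^2)"
    by (rule plancherel_bound[OF facts(1) C])
  have eq: "norm (fourier (conv_pow f k0) \<theta>)^2 = norm (fourier f \<theta>) powr real (2 * k0)" for \<theta>
  proof -
    have "norm (fourier (conv_pow f k0) \<theta>)^2 = norm (fourier f \<theta>) ^ (2 * k0)"
      by (simp add: facts(2) norm_power power_mult[symmetric] mult.commute)
    also have "\<dots> = norm (fourier f \<theta>) powr real (2 * k0)"
      using k0(1) by (intro powr_nat_eq[symmetric]) auto
    finally show ?thesis .
  qed
  have "in_Lp (real (2 * k0)) (fourier f)"
    unfolding in_Lp_def using fm int eq by simp
  moreover have "1 \<le> real (2 * k0)" using k0(1) by simp
  ultimately show "\<exists>p::real. 1 \<le> p \<and> in_Lp p (fourier f)" by blast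
next
  have f: "integrable lborel f" using assms .
  have [measurable]: "f \<in> borel_measurable lborel" using f by auto
  assume "\<exists>p::real. 1 \<le> p \<and> in_Lp p (fourier f)"
  then obtain p where p: "1 \<le> p" "in_Lp p (fourier f)" by blast
  have pint: "integrable lborel (\<lambda>\<theta>. norm (fourier f \<theta>) powr p)" using p(2) unfolding in_Lp_def by blast
  define k where "k = nat \<lceil>p\<rceil>"
  have pk: "p \<le> real k" unfolding k_def by linarith
  have k1: "k \<ge> 1" using pk p(1) by simp
  have ks: "k = Suc (k - 1)" using k1 by simp
  have facts: "integrable lborel (conv_pow f k)" "\<And>\<theta>. fourier (conv_pow f k) \<theta> = fourier f \<theta> ^ k"
    using conv_pow_facts[OF f, of "k - 1"] ks[symmetric] by auto
  define B where "B = (LINT x|lborel. norm (f x))"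
  have "integrable lborel (fourier (conv_pow f k))"
  proof (rule Bochner_Integration.integrable_bound[OF integrable_mult_right[OF pint, of "B powr (real k - p)"]])
    have [measurable]: "conv_pow f k \<in> borel_measurable lborel" using facts(1) by auto
    show "fourier (conv_pow f k) \<in> borel_measurable lborel" by measurable
    show "AE \<theta> in lborel. norm (fourier (conv_pow f k) \<theta>) \<le> norm (B powr (real k - p) * norm (fourier f \<theta>) powr p)"
    proof (rule AE_I2)
      fix \<theta>
      have "norm (fourier f \<theta>) ^ k \<le> B powr (real k - p) * norm (fourier f \<theta>) powr p"
        by (rule pow_le) (use fourier_bound[OF f, of \<theta>] p(1) pk in \<open>auto simp: B_def\<close>)
      then show "norm (fourier (conv_pow f k) \<theta>) \<le> norm (B powr (real k - p) * norm (fourier f \<theta>) powr p)"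
        by (simp add: facts(2) norm_power)
    qed
  qed
  from bounded_from_ft[OF facts(1) this] obtain C where "AE x in lborel. norm (conv_pow f k x) \<le> C" by blast
  then have "in_Linf (conv_pow f k)" unfolding in_Linf_def using facts(1) by auto
  then show "\<exists>k0::nat. k0 \<ge> 1 \<and> in_Linf (conv_pow f k0)" using k1 by blast
qed


end
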